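(* Let $G_1$ and $G_2$ be two disjoint $(k+1)$-critical hypergraphs with $k\ge2$, let $\tilde e\in E(G_1)$, let $\tilde v$ be a low vertex of $G_2$, and let $s$ be any admissible map for $(\tilde e,G_2,\tilde v)$. Then $G=S(G_1,\tilde e,G_2,\tilde v,s)$ is $(k+1)$-critical, and $\partial_G(V(G_1))$ is a separating edge set of $G$ of size $k$.
   Context: A hypergraph is a pair $G=(V,E)$ of finite sets with $E\subseteq 2^V$ and $|e|\ge2$ for all $e\in E$. A coloring requires every edge to contain two vertices of different colors; $\chi$ is the chromatic number. $G$ is $(k+1)$-critical if $\chi(G)=k+1$ but $\chi(H)\le k$ for every proper subhypergraph $H$. In a $(k+1)$-critical hypergraph, a low vertex is one of degree exactly $k$ (degree = number of edges containing it). $\partial_G(X)$ is the set of edges meeting both $X$ and $V(G)\setminus X$; $\partial_G(v)=\partial_G(\{v\})$. A separating edge set is $F\subseteq E(G)$ such that $G-F$ has more components than $G$. Splitting: let $G_1,G_2$ be disjoint hypergraphs, $\tilde e\in E(G_1)$, $\tilde v\in V(G_2)$, and $s:\partial_{G_2}(\tilde v)\to 2^{\tilde e}$ a map (called admissible) with $s(e)\ne\varnothing$ for all $e$ and $\bigcup_{e}s(e)=\tilde e$. Then $S(G_1,\tilde e,G_2,\tilde v,s)$ is the hypergraph with vertex set $V(G_1)\cup(V(G_2)\setminus\{\tilde v\})$ and edge set $(E(G_1)\setminus\{\tilde e\})\cup(E(G_2)\setminus\partial_{G_2}(\tilde v))\cup\{(e\setminus\{\tilde v\})\cup s(e): e\in\partial_{G_2}(\tilde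 v)\}$. *)

theory Defs
  imports Main
begin

type_synonym 'a hgraph = "'a set \<times> 'a set set"

definition verts :: "'a hgraph \<Rightarrow> 'a set" where "verts G = fst G"
definition edges :: "'a hgraph \<Rightarrow> 'a set set" where "edges G = snd G"

definition hypergraph :: "'a hgraph \<Rightarrow> bool" where
  "hypergraph G \<longleftrightarrow> finite (verts G) \<and> finite (edges G) \<and> edges G \<subseteq> Pow (verts G)
     \<and> (\<forall>e\<in>edges G. card e \<ge> 2)"

definition colorable :: "'a hgraph \<Rightarrow> nat \<Rightarrow> bool" where
  "colorable G k \<longleftrightarrow> (\<exists>f :: 'a \<Rightarrow> nat. (\<forall>v\<in>verts G. f v < k) \<and>
      (\<forall>e\<in>edges G. \<exists>u\<in>e. \<exists>w\<in>e. f u \<noteq> f w))"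

definition chi :: "'a hgraph \<Rightarrow> nat" where
  "chi G = (LEAST k. colorable G k)"

definition subhypergraph :: "'a hgraph \<Rightarrow> 'a hgraph \<Rightarrow> bool" where
  "subhypergraph H G \<longleftrightarrow> hypergraph H \<and> verts H \<subseteq> verts G \<and> edges H \<subseteq> edges G"

definition critical :: "'a hgraph \<Rightarrow> nat \<Rightarrow> bool" where
  "critical G m \<longleftrightarrow> hypergraph G \<and> chi G = m \<and>
     (\<forall>H. subhypergraph H G \<and> H \<noteq> G \<longrightarrow> chi H < m)"

definition degree :: "'a hgraph \<Rightarrow> 'a \<Rightarrow> nat" where
  "degree G v = card {e \<in> edges G. v \<in> e}"

definition boundary :: "'a hgraph \<Rightarrow> 'a set \<Rightarrow> 'a set set" where
  "boundary G X = {e \<in> edges G. e \<inter> X \<noteq> {} \<and> e \<inter> (verts G - X) \<noteq> {}}"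

definition adj_rel :: "'a hgraph \<Rightarrow> ('a \<times> 'a) set" where
  "adj_rel G = {(u, w). \<exists>e\<in>edges G. u \<in> e \<and> w \<in> e}"

definition conn_rel :: "'a hgraph \<Rightarrow> ('a \<times> 'a) set" where
  "conn_rel G = Id_on (verts G) \<union> (adj_rel G)\<^sup>+"

definition num_components :: "'a hgraph \<Rightarrow> nat" where
  "num_components G = card (verts G // conn_rel G)"

definition delete_edges :: "'a hgraph \<Rightarrow> 'a set set \<Rightarrow> 'a hgraph" where
  "delete_edges G F = (verts G, edges G - F)"

definition separating :: "'a hgraph \<Rightarrow> 'a set set \<Rightarrow> bool" where
  "separating G F \<longleftrightarrow> F \<subseteq> edges G \<and> num_components (delete_edges G F) > num_components G"

definition admissible :: "'a set \<Rightarrow> 'a hgraph \<Rightarrow> 'a \<Rightarrow> ('a set \<Rightarrow> 'a set) \<Rightarrow> bool" where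
  "admissible et G2 vt s \<longleftrightarrow>
     (\<forall>e\<in>boundary G2 {vt}. s e \<noteq> {} \<and> s e \<subseteq> et) \<and> (\<Union>e\<in>boundary G2 {vt}. s e) = et"

definition splitting :: "'a hgraph \<Rightarrow> 'a set \<Rightarrow> 'a hgraph \<Rightarrow> 'a \<Rightarrow> ('a set \<Rightarrow> 'a set) \<Rightarrow> 'a hgraph" where
  "splitting G1 et G2 vt s =
     (verts G1 \<union> (verts G2 - {vt}),
      (edges G1 - {et}) \<union> (edges G2 - boundary G2 {vt}) \<union>
      {(e - {vt}) \<union> s e | e. e \<in> boundary G2 {vt}})"

end

theory Submission
  imports Defs "HOL-Combinatorics.Transposition"
begin


lemma perm_avoid:
  fixes D :: "nat \<Rightarrow> nat" and P S :: "nat set"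
  assumes fin: "finite S" and PS: "P \<subseteq> S"
    and C: "\<forall>x\<in>P. \<exists>y\<in>S. y \<noteq> x \<and> (y \<notin> P \<or> D y \<noteq> D x)"
  shows "\<exists>\<psi>. inj_on \<psi> S \<and> \<psi> ` S \<subseteq> S \<and> (\<forall>x\<in>P. \<psi> x \<noteq> D x)"
proof -
  have main: "\<And>\<psi>. inj_on \<psi> S \<Longrightarrow> \<psi> ` S \<subseteq> S \<Longrightarrow>
     \<exists>\<psi>'. inj_on \<psi>' S \<and> \<psi>' ` S \<subseteq> S \<and> (\<forall>x\<in>P. \<psi>' x \<noteq> D x)"
  proof -
    fix \<psi>
    show "inj_on \<psi> S \<Longrightarrow> \<psi> ` S \<subseteq> S \<Longrightarrow>
     \<exists>\<psi>'. inj_on \<psi>' S \<and> \<psi>' ` S \<subseteq> S \<and> (\<forall>x\<in>P. \<psi>' x \<noteq> D x)"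
    proof (induction "card {x\<in>P. \<psi> x = D x}" arbitrary: \<psi> rule: less_induct)
      case less
      show ?case
      proof (cases "{x\<in>P. \<psi> x = D x} = {}")
        case True
        then show ?thesis using less.prems by blast
      next
        case False
        then obtain x where x: "x \<in> P" "\<psi> x = D x" by blast
        from C x obtain y where y: "y \<in> S" "y \<noteq> x" "y \<notin> P \<or> D y \<noteq> D x" by blast
        have xS: "x \<in> S" using x PS by blast
        define \<phi> where "\<phi> = Fun.swap x y \<psi>"
        have inj: "inj_on \<phi> S" unfolding \<phi>_def using less.prems xS y by (simp add: inj_on_imp_inj_on_swap)
        have img: "\<phi> ` S \<subseteq> S" unfolding \<phi>_def using less.prems xS y swap_image_eq[of x S y \<psi>] by simp
        have "\<psi> y \<noteq> \<psi> x" using less.prems(1) xS y by (meson inj_on_eq_iff)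
        then have sub: "{z\<in>P. \<phi> z = D z} \<subseteq> {z\<in>P. \<psi> z = D z} - {x}"
          unfolding \<phi>_def using x y by (auto simp: Fun.swap_def split: if_splits)
        have finP: "finite P" using fin PS finite_subset by blast
        have "card {z\<in>P. \<phi> z = D z} < card {z\<in>P. \<psi> z = D z}"
        proof -
          have "card {z\<in>P. \<phi> z = D z} \<le> card ({z\<in>P. \<psi> z = D z} - {x})"
            using sub finP by (intro card_mono) auto
          also have "\<dots> < card {z\<in>P. \<psi> z = D z}"
            using x finP by (intro card_Diff1_less) auto
          finally show ?thesis .
        qed
        then show ?thesis using less.hyps inj img by blast
      qed
    qed
  qed
  show ?thesis using main[of id] by simp
qed




definition prop_e :: "'a set \<Rightarrow> ('a \<Rightarrow> nat) \<Rightarrow> bool" where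
  "prop_e e f \<longleftrightarrow> (\<exists>u\<in>e. \<exists>w\<in>e. f u \<noteq> f w)"

lemma colorable_mono: assumes "colorable G k" "k \<le> k'" shows "colorable G k'"
proof -
  from assms(1) obtain f :: "'a \<Rightarrow> nat" where f: "\<forall>v\<in>verts G. f v < k" "\<forall>e\<in>edges G. \<exists>u\<in>e. \<exists>w\<in>e. f u \<noteq> f w"
    unfolding colorable_def by blast
  have "\<forall>v\<in>verts G. f v < k'" using f(1) assms(2) by (auto intro: less_le_trans)
  then show ?thesis unfolding colorable_def using f(2) by blast
qed

lemma colorable_exists:
  assumes "hypergraph G" shows "\<exists>k. colorable G k"
proof -
  have fin: "finite (verts G)" using assms hypergraph_def by blast
  obtain f :: "'a \<Rightarrow> nat" where f: "inj_on f (verts G)"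
    using finite_imp_inj_to_nat_seg[OF fin] by blast
  define m where "m = Suc (Max (f ` verts G))"
  have bound: "\<forall>v\<in>verts G. f v < m"
  proof
    fix v assume "v \<in> verts G"
    then have "f v \<le> Max (f ` verts G)" using fin by simp
    then show "f v < m" unfolding m_def by simp
  qed
  have "colorable G m"
    unfolding colorable_def
  proof (intro exI[of _ f] conjI ballI)
    fix v assume "v \<in> verts G" then show "f v < m" using bound by blast
  next
    fix e assume e: "e \<in> edges G"
    then have c2: "card e \<ge> 2" and sub: "e \<subseteq> verts G" using assms unfolding hypergraph_def by auto
    then have "e \<noteq> {}" by auto
    then obtain u where u: "u \<in> e" by blast
    have "\<exists>w\<in>e. w \<noteq> u"
    proof (rule ccontr)
      assume "\<not> (\<exists>w\<in>e. w \<noteq> u)"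
      then have "e \<subseteq> {u}" by blast
      then have "card e \<le> card {u}" by (intro card_mono) auto
      then show False using c2 by simp
    qed
    then obtain w where w: "w \<in> e" "w \<noteq> u" by blast
    have "f u \<noteq> f w"
    proof
      assume "f u = f w"
      then have "u = w" using f sub u w(1) unfolding inj_on_def by blast
      then show False using w(2) by simp
    qed
    then show "\<exists>u\<in>e. \<exists>w\<in>e. f u \<noteq> f w" using u w by blast
  qed
  then show ?thesis by blast
qed

lemma chi_colorable: assumes "hypergraph G" shows "colorable G (chi G)"
proof -
  obtain k where "colorable G k" using colorable_exists[OF assms] by blast
  then show ?thesis unfolding chi_def by (rule LeastI)
qed

lemma chi_le: "colorable G k \<Longrightarrow> chi G \<le> k"
  unfolding chi_def by (rule Least_le)

lemma chi_less_iff: "hypergraph H \<Longrightarrow> chi H < k + 1 \<longleftrightarrow> colorable H k"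
proof
  assume "hypergraph H" "chi H < k + 1"
  then show "colorable H k" using chi_colorable[of H] colorable_mono[of H "chi H" k] by simp
next
  assume "colorable H k" then show "chi H < k + 1" using chi_le[of H k] by simp
qed

lemma chi_eqI: assumes "colorable G (k+1)" "\<not> colorable G k" shows "chi G = k + 1"
proof -
  have "chi G \<le> k + 1" using chi_le assms(1) by blast
  moreover have "colorable G (chi G)" unfolding chi_def using assms(1) by (rule LeastI)
  then have "\<not> chi G \<le> k" using assms(2) colorable_mono by blast
  ultimately show ?thesis by simp
qed

lemma critical_not_col: "critical G (k+1) \<Longrightarrow> \<not> colorable G k"
  unfolding critical_def using chi_le by fastforce

lemma critical_del_edge:
  assumes "critical G (k+1)" "e \<in> edges G"
  shows "\<exists>f. (\<forall>v\<in>verts G. f v < k) \<and> (\<forall>e'\<in>edges G - {e}. prop_e e' f)"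
proof -
  let ?H = "(verts G, edges G - {e})"
  have hg: "hypergraph G" using assms critical_def by blast
  have "hypergraph ?H" using hg unfolding hypergraph_def verts_def edges_def by auto
  moreover have "subhypergraph ?H G" using calculation unfolding subhypergraph_def verts_def edges_def by auto
  moreover have "?H \<noteq> G"
  proof
    assume "?H = G" then have "edges ?H = edges G" by simp
    then show False using assms(2) unfolding edges_def by auto
  qed
  ultimately have "chi ?H < k + 1" using assms(1) unfolding critical_def by blast
  then have "colorable ?H k" using chi_less_iff \<open>hypergraph ?H\<close> by blast
  then show ?thesis unfolding colorable_def prop_e_def verts_def edges_def by auto
qed

lemma critical_del_vert:
  assumes "critical G (k+1)" "v \<in> verts G"
  shows "\<exists>f. (\<forall>u\<in>verts G - {v}. f u < k) \<and> (\<forall>e'\<in>edges G. v \<notin> e' \<longrightarrow> prop_e e' f)"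
proof -
  let ?H = "(verts G - {v}, {e\<in>edges G. v \<notin> e})"
  have hg: "hypergraph G" using assms critical_def by blast
  have "hypergraph ?H" using hg unfolding hypergraph_def verts_def edges_def by auto
  moreover have "subhypergraph ?H G" using calculation unfolding subhypergraph_def verts_def edges_def by auto
  moreover have "?H \<noteq> G"
  proof
    assume "?H = G" then have "verts ?H = verts G" by simp
    then show False using assms(2) unfolding verts_def by auto
  qed
  ultimately have "chi ?H < k + 1" using assms(1) unfolding critical_def by blast
  then have "colorable ?H k" using chi_less_iff \<open>hypergraph ?H\<close> by blast
  then show ?thesis unfolding colorable_def prop_e_def verts_def edges_def by auto
qed

lemma critical_no_isolated:
  assumes "critical G (k+1)" "k \<ge> 1" "v \<in> verts G"
  shows "\<exists>e\<in>edges G. v \<in> e"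
proof (rule ccontr)
  assume na: "\<not> (\<exists>e\<in>edges G. v \<in> e)"
  obtain f where f: "\<forall>u\<in>verts G - {v}. f u < k" "\<forall>e'\<in>edges G. v \<notin> e' \<longrightarrow> prop_e e' f"
    using critical_del_vert[OF assms(1,3)] by blast
  have "colorable G k" unfolding colorable_def
  proof (intro exI[of _ "f(v := 0)"] conjI ballI)
    fix u assume "u \<in> verts G" then show "(f(v := 0)) u < k" using f assms(2) by auto
  next
    fix e assume e: "e \<in> edges G"
    then have "v \<notin> e" using na by blast
    then obtain u w where "u \<in> e" "w \<in> e" "f u \<noteq> f w" using f(2) e unfolding prop_e_def by blast
    moreover have "u \<noteq> v" "w \<noteq> v" using calculation \<open>v \<notin> e\<close> by auto
    ultimately show "\<exists>u\<in>e. \<exists>w\<in>e. (f(v := 0)) u \<noteq> (f(v := 0)) w" by auto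
  qed
  then show False using critical_not_col assms(1) by blast
qed




lemma two_elems: "card e \<ge> 2 \<Longrightarrow> \<exists>u\<in>e. u \<noteq> x"
proof (rule ccontr)
  assume "card e \<ge> 2" "\<not> (\<exists>u\<in>e. u \<noteq> x)"
  then have "e \<subseteq> {x}" by blast
  then have "card e \<le> card {x}" by (intro card_mono) auto
  then have "card e \<le> 1" by simp
  then show False using \<open>card e \<ge> 2\<close> by simp
qed

lemma card_two: "finite X \<Longrightarrow> a \<in> X \<Longrightarrow> b \<in> X \<Longrightarrow> a \<noteq> b \<Longrightarrow> 2 \<le> card X"
proof -
  assume "finite X" "a \<in> X" "b \<in> X" "a \<noteq> b"
  then have "card {a,b} \<le> card X" by (intro card_mono) auto
  then show ?thesis using \<open>a \<noteq> b\<close> by simp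
qed

locale SP =
  fixes G1 G2 :: "'a hgraph" and et :: "'a set" and vt :: 'a and s :: "'a set \<Rightarrow> 'a set"
    and k :: nat
  assumes k2: "k \<ge> 2"
    and disj: "verts G1 \<inter> verts G2 = {}"
    and crit1: "critical G1 (k + 1)"
    and crit2: "critical G2 (k + 1)"
    and etE: "et \<in> edges G1"
    and vtV: "vt \<in> verts G2"
    and deg: "degree G2 vt = k"
    and adm: "admissible et G2 vt s"
begin

abbreviation "V1 \<equiv> verts G1"
abbreviation "V2 \<equiv> verts G2"
abbreviation "E1 \<equiv> edges G1"
abbreviation "E2 \<equiv> edges G2"
abbreviation "B \<equiv> boundary G2 {vt}"
definition nE :: "'a set \<Rightarrow> 'a set" where "nE e = (e - {vt}) \<union> s e"
abbreviation "G \<equiv> splitting G1 et G2 vt s"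

lemma hg1: "hypergraph G1" using crit1 critical_def by blast
lemma hg2: "hypergraph G2" using crit2 critical_def by blast

lemma E1sub: "e \<in> E1 \<Longrightarrow> e \<subseteq> V1" using hg1 hypergraph_def by blast
lemma E2sub: "e \<in> E2 \<Longrightarrow> e \<subseteq> V2" using hg2 hypergraph_def by blast
lemma E1card: "e \<in> E1 \<Longrightarrow> card e \<ge> 2" using hg1 hypergraph_def by blast
lemma E2card: "e \<in> E2 \<Longrightarrow> card e \<ge> 2" using hg2 hypergraph_def by blast
lemma finV1: "finite V1" using hg1 hypergraph_def by blast
lemma finV2: "finite V2" using hg2 hypergraph_def by blast
lemma finE1: "finite E1" using hg1 hypergraph_def by blast
lemma finE2: "finite E2" using hg2 hypergraph_def by blast

lemma etV1: "et \<subseteq> V1" using E1sub etE by blast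

lemma B_eq: "B = {e\<in>E2. vt \<in> e}"
proof -
  have "e \<in> B \<longleftrightarrow> e \<in> E2 \<and> vt \<in> e" for e
  proof -
    have "e \<inter> (V2 - {vt}) \<noteq> {}" if eE: "e \<in> E2"
    proof -
      obtain u where "u \<in> e" "u \<noteq> vt" using two_elems[of e vt] E2card[OF eE] by blast
      then show ?thesis using E2sub[OF eE] by blast
    qed
    then show ?thesis unfolding boundary_def by auto
  qed
  then show ?thesis by blast
qed

lemma cardB: "card B = k" using deg unfolding degree_def B_eq by simp
lemma finB: "finite B" using finE2 B_eq by simp
lemma sB: "e \<in> B \<Longrightarrow> s e \<noteq> {} \<and> s e \<subseteq> et" using adm unfolding admissible_def by blast
lemma unionB: "(\<Union>e\<in>B. s e) = et" using adm unfolding admissible_def by blast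
lemma BE2: "e \<in> B \<Longrightarrow> e \<in> E2 \<and> vt \<in> e" using B_eq by blast
lemma E2B: "e \<in> E2 - B \<Longrightarrow> e \<subseteq> V2 - {vt}" using B_eq E2sub by blast

lemma Gv: "verts G = V1 \<union> (V2 - {vt})" unfolding splitting_def verts_def by simp
lemma Ge: "edges G = (E1 - {et}) \<union> (E2 - B) \<union> nE ` B"
  unfolding splitting_def edges_def nE_def by (simp add: setcompr_eq_image)

lemma B_rest: "e \<in> B \<Longrightarrow> \<exists>u\<in>e. u \<noteq> vt" using two_elems[of e vt] BE2[of e] E2card[of e] by blast

lemma B_facts: assumes "e \<in> B" shows "e \<subseteq> V2" "s e \<subseteq> V1" "s e \<noteq> {}" "vt \<in> e"
proof -
  show "e \<subseteq> V2" using BE2[OF assms] E2sub by blast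
  show "s e \<subseteq> V1" using sB[OF assms] etV1 by blast
  show "s e \<noteq> {}" using sB[OF assms] by blast
  show "vt \<in> e" using BE2[OF assms] by blast
qed

lemma nE_sub: "e \<in> B \<Longrightarrow> nE e \<subseteq> V1 \<union> (V2 - {vt})"
  unfolding nE_def using B_facts[of e] by blast

lemma nE_V1: "e \<in> B \<Longrightarrow> nE e \<inter> V1 = s e"
  unfolding nE_def using B_facts[of e] disj by blast

lemma nE_V2: "e \<in> B \<Longrightarrow> nE e - V1 = e - {vt}"
  unfolding nE_def using B_facts[of e] disj by blast

lemma hyp_G: "hypergraph G"
  unfolding hypergraph_def
proof (intro conjI ballI)
  show "finite (verts G)" using Gv finV1 finV2 by simp
  show "finite (edges G)" using Ge finE1 finE2 finB by simp
  show "edges G \<subseteq> Pow (verts G)"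
  proof
    fix e assume "e \<in> edges G"
    then consider "e \<in> E1" | "e \<in> E2 - B" | e' where "e' \<in> B" "e = nE e'" using Ge by blast
    then show "e \<in> Pow (verts G)"
    proof cases
      case 1 then show ?thesis using E1sub[OF 1] Gv by blast
    next
      case 2 then show ?thesis using E2B[OF 2] Gv by blast
    next
      case 3 then show ?thesis using nE_sub[OF 3(1)] Gv by blast
    qed
  qed
  fix e assume e: "e \<in> edges G"
  show "2 \<le> card e"
  proof -
    consider "e \<in> E1" | "e \<in> E2" | e' where "e' \<in> B" "e = nE e'" using e Ge by blast
    then show ?thesis
    proof cases
      case 1 then show ?thesis using E1card by blast
    next
      case 2 then show ?thesis using E2card by blast
    next
      case 3
      obtain u where u: "u \<in> e'" "u \<noteq> vt" using B_rest[OF 3(1)] by blast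
      obtain w where w: "w \<in> s e'" using B_facts(3)[OF 3(1)] by blast
      have ue: "u \<in> e" and we: "w \<in> e" using u w 3 unfolding nE_def by auto
      have "u \<notin> V1" using u B_facts(1)[OF 3(1)] disj by blast
      moreover have "w \<in> V1" using w B_facts(2)[OF 3(1)] by blast
      ultimately have "u \<noteq> w" by blast
      moreover have "finite e"
      proof -
        have "finite (V1 \<union> (V2 - {vt}))" using finV1 finV2 by simp
        moreover have "e \<subseteq> V1 \<union> (V2 - {vt})" using nE_sub[OF 3(1)] 3(2) by simp
        ultimately show ?thesis using finite_subset by blast
      qed
      ultimately show ?thesis using card_two[of e w u] ue we by metis
    qed
  qed
qed

lemma not_col: "\<not> colorable G k"
proof
  assume "colorable G k"
  then obtain f :: "'a \<Rightarrow> nat" where f1: "\<forall>v\<in>verts G. f v < k"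
    and f2: "\<forall>e\<in>edges G. \<exists>u\<in>e. \<exists>w\<in>e. f u \<noteq> f w"
    unfolding colorable_def by blast
  have mono: "\<forall>u\<in>et. \<forall>w\<in>et. f u = f w"
  proof (rule ccontr)
    assume "\<not> ?thesis"
    then have pe: "\<exists>u\<in>et. \<exists>w\<in>et. f u \<noteq> f w" by blast
    have "colorable G1 k" unfolding colorable_def
    proof (intro exI[of _ f] conjI ballI)
      fix v assume "v \<in> V1" then have "v \<in> verts G" using Gv by simp
      then show "f v < k" using f1 by blast
    next
      fix e assume e: "e \<in> E1"
      show "\<exists>u\<in>e. \<exists>w\<in>e. f u \<noteq> f w"
      proof (cases "e = et")
        case True then show ?thesis using pe by simp
      next
        case False then have "e \<in> edges G" using e Ge by simp
        then show ?thesis using f2 by blast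
      qed
    qed
    then show False using critical_not_col[OF crit1] by blast
  qed
  obtain a where a: "a \<in> et" using two_elems[of et a] E1card[OF etE] by blast
  define c where "c = f a"
  have "a \<in> verts G" using Gv a etV1 by blast
  then have c: "c < k" using f1 c_def by blast
  have sc: "\<And>x. x \<in> et \<Longrightarrow> f x = c" using mono a c_def by blast
  have "colorable G2 k" unfolding colorable_def
  proof (intro exI[of _ "f(vt := c)"] conjI ballI)
    fix v assume v: "v \<in> V2"
    show "(f(vt := c)) v < k"
    proof (cases "v = vt")
      case True then show ?thesis using c by simp
    next
      case False then have "v \<in> verts G" using Gv v by simp
      then show ?thesis using f1 False by simp
    qed
  next
    fix e assume e: "e \<in> E2"
    show "\<exists>u\<in>e. \<exists>w\<in>e. (f(vt := c)) u \<noteq> (f(vt := c)) w"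
    proof (cases "e \<in> B")
      case False
      then have nv: "vt \<notin> e" using e B_eq by simp
      have "e \<in> edges G" using e False Ge by simp
      then obtain u w where uw: "u \<in> e" "w \<in> e" "f u \<noteq> f w" using f2 by blast
      have "u \<noteq> vt" "w \<noteq> vt" using uw nv by auto
      then show ?thesis using uw by (intro bexI[of _ u] bexI[of _ w]) auto
    next
      case True
      then have "nE e \<in> edges G" using Ge by simp
      then obtain u w where uw: "u \<in> nE e" "w \<in> nE e" "f u \<noteq> f w" using f2 by blast
      have sc': "\<And>x. x \<in> s e \<Longrightarrow> f x = c" using sB[OF True] sc by blast
      have vte: "vt \<in> e" using B_facts(4)[OF True] .
      show ?thesis
      proof (cases "u \<in> s e")
        case u: True
        then have "w \<notin> s e" using uw sc' by auto
        then have "w \<in> e" "w \<noteq> vt" using uw unfolding nE_def by auto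
        then show ?thesis using vte uw sc' u by (intro bexI[of _ vt] bexI[of _ w]) auto
      next
        case u: False
        then have ue: "u \<in> e" "u \<noteq> vt" using uw unfolding nE_def by auto
        show ?thesis
        proof (cases "w \<in> s e")
          case True
          then show ?thesis using vte uw sc' ue by (intro bexI[of _ vt] bexI[of _ u]) auto
        next
          case False
          then have "w \<in> e" "w \<noteq> vt" using uw unfolding nE_def by auto
          then show ?thesis using ue uw by (intro bexI[of _ u] bexI[of _ w]) auto
        qed
      qed
    qed
  qed
  then show False using critical_not_col[OF crit2] by blast
qed

end



context SP begin

lemma mono_et:
  assumes g1a: "\<forall>v\<in>V1. g1 v < k" and g1b: "\<forall>e'\<in>E1 - {et}. prop_e e' g1"
  shows "\<forall>u\<in>et. \<forall>w\<in>et. g1 u = g1 w"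
proof (rule ccontr)
  assume "\<not> ?thesis"
  then have pe: "prop_e et g1" unfolding prop_e_def by blast
  have "colorable G1 k" unfolding colorable_def
  proof (intro exI[of _ g1] conjI ballI)
    fix v assume "v \<in> V1" then show "g1 v < k" using g1a by blast
  next
    fix e assume e: "e \<in> E1"
    have "prop_e e g1"
    proof (cases "e = et")
      case True then show ?thesis using pe by simp
    next
      case False then show ?thesis using g1b e by blast
    qed
    then show "\<exists>u\<in>e. \<exists>w\<in>e. g1 u \<noteq> g1 w" unfolding prop_e_def .
  qed
  then show False using critical_not_col[OF crit1] by blast
qed

lemma delB:
  assumes e0: "e0 \<in> E2"
  shows "\<exists>h. (\<forall>v\<in>verts G. h v < k) \<and> (\<forall>e\<in>E1 - {et}. prop_e e h)
     \<and> (\<forall>e\<in>E2 - B - {e0}. prop_e e h) \<and> (\<forall>e\<in>B - {e0}. prop_e (nE e) h)"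
proof -
  obtain g2 :: "'a \<Rightarrow> nat" where g2a: "\<forall>v\<in>V2. g2 v < k" and g2b: "\<forall>e'\<in>E2 - {e0}. prop_e e' g2"
    using critical_del_edge[OF crit2 e0] by blast
  obtain g1 :: "'a \<Rightarrow> nat" where g1a: "\<forall>v\<in>V1. g1 v < k" and g1b: "\<forall>e'\<in>E1 - {et}. prop_e e' g1"
    using critical_del_edge[OF crit1 etE] by blast
  have mono: "\<forall>u\<in>et. \<forall>w\<in>et. g1 u = g1 w" using mono_et[OF g1a g1b] .
  obtain a where a: "a \<in> et" using two_elems[of et a] E1card[OF etE] by blast
  define c where "c = g1 a"
  have c: "c < k" using g1a a etV1 c_def by blast
  have sc: "\<And>x. x \<in> et \<Longrightarrow> g1 x = c" using mono a c_def by blast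
  define d where "d = g2 vt"
  have d: "d < k" using g2a vtV d_def by blast
  define \<tau> where "\<tau> x = (if x = c then d else if x = d then c else x)" for x
  have \<tau>inj: "\<And>x y. \<tau> x = \<tau> y \<Longrightarrow> x = y" unfolding \<tau>_def by (auto split: if_splits)
  have \<tau>k: "\<And>x. x < k \<Longrightarrow> \<tau> x < k" unfolding \<tau>_def using c d by auto
  have \<tau>d: "\<tau> d = c" unfolding \<tau>_def by simp
  define h where "h v = (if v \<in> V1 then g1 v else \<tau> (g2 v))" for v
  have hV2: "\<And>v. v \<in> V2 \<Longrightarrow> h v = \<tau> (g2 v)" unfolding h_def using disj by auto
  have hV1: "\<And>v. v \<in> V1 \<Longrightarrow> h v = g1 v" unfolding h_def by auto
  show ?thesis
  proof (intro exI[of _ h] conjI ballI)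
    fix v assume "v \<in> verts G"
    then have "v \<in> V1 \<or> v \<in> V2" using Gv by auto
    then show "h v < k"
    proof
      assume "v \<in> V1" then show ?thesis using hV1 g1a by simp
    next
      assume "v \<in> V2" then show ?thesis using hV2 g2a \<tau>k by simp
    qed
  next
    fix e assume e: "e \<in> E1 - {et}"
    then obtain u w where uw: "u \<in> e" "w \<in> e" "g1 u \<noteq> g1 w" using g1b unfolding prop_e_def by blast
    have "u \<in> V1" "w \<in> V1" using uw E1sub e by auto
    then show "prop_e e h" unfolding prop_e_def using uw hV1 by metis
  next
    fix e assume e: "e \<in> E2 - B - {e0}"
    then obtain u w where uw: "u \<in> e" "w \<in> e" "g2 u \<noteq> g2 w" using g2b unfolding prop_e_def by blast
    have "u \<in> V2" "w \<in> V2" using uw E2sub e by auto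
    then have "h u \<noteq> h w" using hV2 uw(3) \<tau>inj by metis
    then show "prop_e e h" unfolding prop_e_def using uw by blast
  next
    fix e assume e: "e \<in> B - {e0}"
    then have eB: "e \<in> B" by simp
    have "e \<in> E2 - {e0}" using e BE2 by blast
    then obtain u w where uw: "u \<in> e" "w \<in> e" "g2 u \<noteq> g2 w" using g2b unfolding prop_e_def by blast
    have uV: "u \<in> V2" "w \<in> V2" using uw B_facts(1)[OF eB] by auto
    obtain a' where a': "a' \<in> s e" using B_facts(3)[OF eB] by blast
    have a'et: "a' \<in> et" using a' sB[OF eB] by blast
    have ha': "h a' = c" using hV1 sc a'et etV1 by auto
    have a'n: "a' \<in> nE e" using a' unfolding nE_def by simp
    show "prop_e (nE e) h"
    proof (cases "u = vt")
      case True
      then have "w \<noteq> vt" using uw by auto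
      then have wn: "w \<in> nE e" using uw unfolding nE_def by simp
      have "h w = \<tau> (g2 w)" using hV2 uV by simp
      moreover have "\<tau> (g2 w) \<noteq> c" using \<tau>d \<tau>inj uw(3) True d_def by metis
      ultimately show ?thesis unfolding prop_e_def using wn a'n ha' by metis
    next
      case False
      then have un: "u \<in> nE e" using uw unfolding nE_def by simp
      show ?thesis
      proof (cases "w = vt")
        case True
        have "h u = \<tau> (g2 u)" using hV2 uV by simp
        moreover have "\<tau> (g2 u) \<noteq> c" using \<tau>d \<tau>inj uw(3) True d_def by metis
        ultimately show ?thesis unfolding prop_e_def using un a'n ha' by metis
      next
        case False
        then have wn: "w \<in> nE e" using uw unfolding nE_def by simp
        have "h u \<noteq> h w" using hV2 uV uw(3) \<tau>inj by metis
        then show ?thesis unfolding prop_e_def using un wn by blast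
      qed
    qed
  qed
qed

lemma delA:
  assumes f0: "f0 \<in> E1" "f0 \<noteq> et"
  shows "\<exists>h. (\<forall>v\<in>verts G. h v < k) \<and> (\<forall>e\<in>E1 - {et} - {f0}. prop_e e h)
     \<and> (\<forall>e\<in>E2 - B. prop_e e h) \<and> (\<forall>e\<in>B. prop_e (nE e) h)"
proof -
  obtain g1 :: "'a \<Rightarrow> nat" where g1a: "\<forall>v\<in>V1. g1 v < k" and g1b: "\<forall>e'\<in>E1 - {f0}. prop_e e' g1"
    using critical_del_edge[OF crit1 f0(1)] by blast
  have pet: "prop_e et g1" using g1b etE f0(2) by blast
  obtain g :: "'a \<Rightarrow> nat" where ga: "\<forall>u\<in>V2 - {vt}. g u < k"
    and gb: "\<forall>e'\<in>E2. vt \<notin> e' \<longrightarrow> prop_e e' g"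
    using critical_del_vert[OF crit2 vtV] by blast
  have X: "\<exists>e\<in>B. \<forall>u\<in>e-{vt}. g u = x" if xk: "x < k" for x
  proof (rule ccontr)
    assume nx: "\<not> ?thesis"
    have x: "x < k" "\<forall>e\<in>B. \<exists>u\<in>e-{vt}. g u \<noteq> x"
    proof -
      show "x < k" using xk .
      show "\<forall>e\<in>B. \<exists>u\<in>e-{vt}. g u \<noteq> x"
      proof
        fix e assume "e \<in> B"
        then have "\<not> (\<forall>u\<in>e-{vt}. g u = x)" using nx by blast
        then show "\<exists>u\<in>e-{vt}. g u \<noteq> x" by blast
      qed
    qed
    have "colorable G2 k" unfolding colorable_def
    proof (intro exI[of _ "g(vt := x)"] conjI ballI)
      fix v assume v: "v \<in> V2"
      show "(g(vt := x)) v < k"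
      proof (cases "v = vt")
        case True then show ?thesis using x by simp
      next
        case False then show ?thesis using ga v by simp
      qed
    next
      fix e assume e: "e \<in> E2"
      show "\<exists>u\<in>e. \<exists>w\<in>e. (g(vt := x)) u \<noteq> (g(vt := x)) w"
      proof (cases "e \<in> B")
        case True
        then obtain u where u: "u \<in> e" "u \<noteq> vt" "g u \<noteq> x" using x(2) by blast
        have "vt \<in> e" using B_facts(4)[OF True] .
        then show ?thesis using u by (intro bexI[of _ u] bexI[of _ vt]) auto
      next
        case False
        then have nv: "vt \<notin> e" using e B_eq by simp
        then obtain u w where uw: "u \<in> e" "w \<in> e" "g u \<noteq> g w" using gb e unfolding prop_e_def by blast
        have "u \<noteq> vt" "w \<noteq> vt" using uw nv by auto
        then show ?thesis using uw by (intro bexI[of _ u] bexI[of _ w]) auto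
      qed
    qed
    then show False using critical_not_col[OF crit2] by blast
  qed
  define Ef where "Ef x = (SOME e. e \<in> B \<and> (\<forall>u\<in>e-{vt}. g u = x))" for x
  have EfB: "\<And>x. x < k \<Longrightarrow> Ef x \<in> B \<and> (\<forall>u\<in>Ef x-{vt}. g u = x)"
  proof -
    fix x assume "x < k"
    then have "\<exists>e. e \<in> B \<and> (\<forall>u\<in>e-{vt}. g u = x)" using X[of x] by blast
    then show "Ef x \<in> B \<and> (\<forall>u\<in>Ef x-{vt}. g u = x)" unfolding Ef_def by (rule someI_ex)
  qed
  have injEf: "inj_on Ef {..<k}"
  proof (rule inj_onI)
    fix x y assume xy: "x \<in> {..<k}" "y \<in> {..<k}" "Ef x = Ef y"
    have ex: "Ef x \<in> B" using EfB xy(1) by simp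
    obtain u where u: "u \<in> Ef x" "u \<noteq> vt" using B_rest[OF ex] by blast
    have "g u = x" using EfB[of x] xy(1) u by simp
    moreover have "g u = y" using EfB[of y] xy u by simp
    ultimately show "x = y" by simp
  qed
  have imgEf: "Ef ` {..<k} = B"
  proof (rule card_subset_eq[OF finB])
    show "Ef ` {..<k} \<subseteq> B" using EfB by auto
    show "card (Ef ` {..<k}) = card B" using card_image[OF injEf] cardB by simp
  qed
  define D where "D x = g1 (SOME u. u \<in> s (Ef x))" for x
  define P where "P = {x\<in>{..<k}. \<forall>u\<in>s (Ef x). g1 u = D x}"
  have C: "\<forall>x\<in>P. \<exists>y\<in>{..<k}. y \<noteq> x \<and> (y \<notin> P \<or> D y \<noteq> D x)"
  proof
    fix x assume xP: "x \<in> P"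
    show "\<exists>y\<in>{..<k}. y \<noteq> x \<and> (y \<notin> P \<or> D y \<noteq> D x)"
    proof (rule ccontr)
      assume "\<not> ?thesis"
      then have H: "\<forall>y\<in>{..<k}. y \<noteq> x \<longrightarrow> y \<in> P \<and> D y = D x" by blast
      have all: "\<forall>y\<in>{..<k}. \<forall>u\<in>s (Ef y). g1 u = D x"
      proof (intro ballI)
        fix y u assume y: "y \<in> {..<k}" and u: "u \<in> s (Ef y)"
        show "g1 u = D x"
        proof (cases "y = x")
          case True then show ?thesis using xP u unfolding P_def by blast
        next
          case False then have "y \<in> P" "D y = D x" using H y by auto
          then show ?thesis using u unfolding P_def by auto
        qed
      qed
      have "\<forall>u\<in>et. g1 u = D x"
      proof
        fix u assume "u \<in> et"
        then obtain e where e: "e \<in> B" "u \<in> s e" using unionB by blast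
        then obtain y where "y \<in> {..<k}" "e = Ef y" using imgEf by blast
        then show "g1 u = D x" using all e by blast
      qed
      then show False using pet unfolding prop_e_def by auto
    qed
  qed
  have PS: "P \<subseteq> {..<k}" unfolding P_def by blast
  obtain \<theta> where th: "inj_on \<theta> {..<k}" "\<theta> ` {..<k} \<subseteq> {..<k}" "\<forall>x\<in>P. \<theta> x \<noteq> D x"
    using perm_avoid[OF finite_lessThan PS C] by blast
  define h where "h v = (if v \<in> V1 then g1 v else \<theta> (g v))" for v
  have hV2: "\<And>v. v \<in> V2 \<Longrightarrow> h v = \<theta> (g v)" unfolding h_def using disj by auto
  have hV1: "\<And>v. v \<in> V1 \<Longrightarrow> h v = g1 v" unfolding h_def by auto
  show ?thesis
  proof (intro exI[of _ h] conjI ballI)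
    fix v assume "v \<in> verts G"
    then have "v \<in> V1 \<or> v \<in> V2 - {vt}" using Gv by auto
    then show "h v < k"
    proof
      assume "v \<in> V1" then show ?thesis using hV1 g1a by simp
    next
      assume v: "v \<in> V2 - {vt}"
      then have "g v \<in> {..<k}" using ga by simp
      then show ?thesis using hV2 v th(2) by auto
    qed
  next
    fix e assume e: "e \<in> E1 - {et} - {f0}"
    then obtain u w where uw: "u \<in> e" "w \<in> e" "g1 u \<noteq> g1 w" using g1b unfolding prop_e_def by blast
    have "u \<in> V1" "w \<in> V1" using uw E1sub e by auto
    then show "prop_e e h" unfolding prop_e_def using uw hV1 by metis
  next
    fix e assume e: "e \<in> E2 - B"
    then have nv: "vt \<notin> e" using B_eq by auto
    then obtain u w where uw: "u \<in> e" "w \<in> e" "g u \<noteq> g w" using gb e unfolding prop_e_def by blast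
    have uV: "u \<in> V2 - {vt}" "w \<in> V2 - {vt}" using uw E2B e by auto
    then have "g u \<in> {..<k}" "g w \<in> {..<k}" using ga by auto
    then have "\<theta> (g u) \<noteq> \<theta> (g w)" using th(1) uw(3) unfolding inj_on_def by blast
    then have "h u \<noteq> h w" using hV2 uV by simp
    then show "prop_e e h" unfolding prop_e_def using uw by blast
  next
    fix e assume eB: "e \<in> B"
    then obtain x where x: "x < k" "e = Ef x" using imgEf by auto
    obtain u0 where u0: "u0 \<in> e" "u0 \<noteq> vt" using B_rest[OF eB] by blast
    have gu0: "g u0 = x" using EfB[OF x(1)] x(2) u0 by simp
    have hu0: "h u0 = \<theta> x" using hV2 gu0 u0 B_facts(1)[OF eB] by auto
    have u0n: "u0 \<in> nE e" using u0 unfolding nE_def by simp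
    define w0 where "w0 = (SOME u. u \<in> s e)"
    have w0: "w0 \<in> s e" unfolding w0_def using B_facts(3)[OF eB] by (simp add: some_in_eq)
    have w0V: "w0 \<in> V1" using w0 B_facts(2)[OF eB] by blast
    have hw0: "h w0 = D x" using hV1[OF w0V] unfolding D_def w0_def x(2) by simp
    have w0n: "w0 \<in> nE e" using w0 unfolding nE_def by simp
    show "prop_e (nE e) h"
    proof (cases "x \<in> P")
      case True
      then have "h u0 \<noteq> h w0" using th(3) hu0 hw0 by simp
      then show ?thesis unfolding prop_e_def using u0n w0n by blast
    next
      case False
      then obtain w where w: "w \<in> s e" "g1 w \<noteq> D x" using x unfolding P_def by auto
      have wV: "w \<in> V1" using w B_facts(2)[OF eB] by blast
      have "h w \<noteq> h w0" using hV1[OF wV] hw0 w(2) by simp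
      moreover have "w \<in> nE e" using w unfolding nE_def by simp
      ultimately show ?thesis unfolding prop_e_def using w0n by blast
    qed
  qed
qed

end



lemma conn_equiv:
  assumes "edges G \<subseteq> Pow (verts G)"
  shows "equiv (verts G) (conn_rel G)"
proof -
  let ?V = "verts G" and ?A = "adj_rel G"
  have AV: "?A \<subseteq> ?V \<times> ?V"
  proof
    fix p assume "p \<in> ?A"
    then obtain u w e where p: "p = (u, w)" "e \<in> edges G" "u \<in> e" "w \<in> e"
      unfolding adj_rel_def by auto
    then have "e \<subseteq> ?V" using assms by auto
    then show "p \<in> ?V \<times> ?V" using p by auto
  qed
  have AV': "?A\<^sup>+ \<subseteq> ?V \<times> ?V" using trancl_subset_Sigma[OF AV] .
  have symA: "sym ?A" unfolding sym_def
  proof (intro allI impI)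
    fix x y assume "(x, y) \<in> ?A"
    then obtain e where "e \<in> edges G" "x \<in> e" "y \<in> e" unfolding adj_rel_def by auto
    then show "(y, x) \<in> ?A" unfolding adj_rel_def by auto
  qed
  have symT: "sym (?A\<^sup>+)" using sym_trancl[OF symA] .
  show ?thesis unfolding conn_rel_def
  proof (rule equivI)
    show "Id_on ?V \<union> ?A\<^sup>+ \<subseteq> ?V \<times> ?V" using AV' by auto
    show "refl_on ?V (Id_on ?V \<union> ?A\<^sup>+)" unfolding refl_on_def by auto
    show "sym (Id_on ?V \<union> ?A\<^sup>+)" using symT unfolding sym_def by auto
    show "trans (Id_on ?V \<union> ?A\<^sup>+)"
    proof (rule transI)
      fix x y z assume xy: "(x, y) \<in> Id_on ?V \<union> ?A\<^sup>+" and yz: "(y, z) \<in> Id_on ?V \<union> ?A\<^sup>+"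
      show "(x, z) \<in> Id_on ?V \<union> ?A\<^sup>+"
      proof (cases "x = y")
        case True then show ?thesis using yz by simp
      next
        case False
        then have xy': "(x, y) \<in> ?A\<^sup>+" using xy by (auto simp: Id_on_def)
        show ?thesis
        proof (cases "y = z")
          case True then show ?thesis using xy' by simp
        next
          case False
          then have "(y, z) \<in> ?A\<^sup>+" using yz by (auto simp: Id_on_def)
          then have "(x, z) \<in> ?A\<^sup>+" by (rule trancl_trans[OF xy'])
          then show ?thesis by (rule UnI2)
        qed
      qed
    qed
  qed
qed

lemma quot_less:
  assumes fin: "finite V" and eR: "equiv V R" and eR': "equiv V R'" and sub: "R' \<subseteq> R"
    and uw: "(u, w) \<in> R" "(u, w) \<notin> R'" and uV: "u \<in> V" and wV: "w \<in> V"
  shows "card (V//R) < card (V//R')"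
proof -
  define \<phi> where "\<phi> C = R `` C" for C
  have transR: "trans R" using eR unfolding equiv_def by blast
  have key: "\<phi> (R'``{x}) = R``{x}" if xV: "x \<in> V" for x
    unfolding \<phi>_def
  proof
    show "R `` (R'``{x}) \<subseteq> R``{x}"
    proof
      fix y assume "y \<in> R `` (R'``{x})"
      then obtain z where z: "(x, z) \<in> R'" "(z, y) \<in> R" by blast
      have "(x, z) \<in> R" using z(1) sub by blast
      then have "(x, y) \<in> R" using z(2) transR unfolding trans_def by blast
      then show "y \<in> R``{x}" by simp
    qed
    show "R``{x} \<subseteq> R `` (R'``{x})"
    proof
      fix y assume "y \<in> R``{x}"
      moreover have "x \<in> R'``{x}" using equiv_class_self[OF eR' xV] .
      ultimately show "y \<in> R `` (R'``{x})" by blast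
    qed
  qed
  have img: "\<phi> ` (V//R') = V//R"
  proof
    show "\<phi> ` (V//R') \<subseteq> V//R"
    proof
      fix X assume "X \<in> \<phi> ` (V//R')"
      then obtain C where C: "C \<in> V//R'" "X = \<phi> C" by blast
      then obtain x where x: "C = R'``{x}" "x \<in> V" by (blast elim: quotientE)
      then show "X \<in> V//R" using C key[OF x(2)] by (simp add: quotientI)
    qed
  next
    show "V//R \<subseteq> \<phi> ` (V//R')"
    proof
      fix X assume "X \<in> V//R"
      then obtain x where x: "X = R``{x}" "x \<in> V" by (blast elim: quotientE)
      then have "X = \<phi> (R'``{x})" using key[OF x(2)] by simp
      moreover have "R'``{x} \<in> V//R'" using x(2) by (rule quotientI)
      ultimately show "X \<in> \<phi> ` (V//R')" by (rule image_eqI)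
    qed
  qed
  have finQ: "finite (V//R')" using finite_quotient[OF fin equiv_type[OF eR']] .
  have ninj: "\<not> inj_on \<phi> (V//R')"
  proof
    assume inj: "inj_on \<phi> (V//R')"
    have q1: "R'``{u} \<in> V//R'" "R'``{w} \<in> V//R'" using uV wV by (auto intro: quotientI)
    have "\<phi> (R'``{u}) = R``{u}" "\<phi> (R'``{w}) = R``{w}" using key uV wV by auto
    moreover have "R``{u} = R``{w}" using eq_equiv_class_iff[OF eR uV wV] uw(1) by simp
    ultimately have "\<phi> (R'``{u}) = \<phi> (R'``{w})" by simp
    then have "R'``{u} = R'``{w}" using inj q1 unfolding inj_on_def by blast
    then have "(u, w) \<in> R'" using eq_equiv_class_iff[OF eR' uV wV] by simp
    then show False using uw(2) by simp
  qed
  have "card (\<phi> ` (V//R')) \<noteq> card (V//R')" using ninj inj_on_iff_eq_card[OF finQ] by blast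
  moreover have "card (\<phi> ` (V//R')) \<le> card (V//R')" using card_image_le[OF finQ] .
  ultimately show ?thesis using img by simp
qed

context SP begin

lemma del_edge:
  assumes f0: "f0 \<in> edges G"
  shows "\<exists>h. (\<forall>v\<in>verts G. h v < k) \<and> (\<forall>e\<in>edges G - {f0}. prop_e e h)"
proof -
  consider "f0 \<in> E1 - {et}" | "f0 \<in> E2 - B" | e0 where "e0 \<in> B" "f0 = nE e0"
    using f0 Ge by blast
  then show ?thesis
  proof cases
    case 1
    then have a: "f0 \<in> E1" "f0 \<noteq> et" by auto
    obtain h where h: "\<forall>v\<in>verts G. h v < k" "\<forall>e\<in>E1 - {et} - {f0}. prop_e e h"
      "\<forall>e\<in>E2 - B. prop_e e h" "\<forall>e\<in>B. prop_e (nE e) h" using delA[OF a] by (elim exE conjE)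
    have "\<forall>e\<in>edges G - {f0}. prop_e e h"
    proof
      fix e assume e: "e \<in> edges G - {f0}"
      then consider "e \<in> E1 - {et} - {f0}" | "e \<in> E2 - B" | e' where "e' \<in> B" "e = nE e'"
        using Ge by blast
      then show "prop_e e h"
      proof cases
        case 1 then show ?thesis using h(2) by blast
      next
        case 2 then show ?thesis using h(3) by blast
      next
        case 3 then show ?thesis using h(4) by blast
      qed
    qed
    then show ?thesis using h(1) by blast
  next
    case 2
    then have e0: "f0 \<in> E2" and nB: "f0 \<notin> B" by auto
    obtain h where h: "\<forall>v\<in>verts G. h v < k" "\<forall>e\<in>E1 - {et}. prop_e e h"
      "\<forall>e\<in>E2 - B - {f0}. prop_e e h" "\<forall>e\<in>B - {f0}. prop_e (nE e) h"
      using delB[OF e0] by (elim exE conjE)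
    have "\<forall>e\<in>edges G - {f0}. prop_e e h"
    proof
      fix e assume e: "e \<in> edges G - {f0}"
      then consider "e \<in> E1 - {et}" | "e \<in> E2 - B - {f0}" | e' where "e' \<in> B" "e = nE e'"
        using Ge by blast
      then show "prop_e e h"
      proof cases
        case 1 then show ?thesis using h(2) by blast
      next
        case 2 then show ?thesis using h(3) by blast
      next
        case 3
        then have "e' \<in> B - {f0}" using nB by auto
        then show ?thesis using h(4) 3(2) by blast
      qed
    qed
    then show ?thesis using h(1) by blast
  next
    case 3
    then have e0: "e0 \<in> E2" using BE2 by blast
    obtain h where h: "\<forall>v\<in>verts G. h v < k" "\<forall>e\<in>E1 - {et}. prop_e e h"
      "\<forall>e\<in>E2 - B - {e0}. prop_e e h" "\<forall>e\<in>B - {e0}. prop_e (nE e) h"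
      using delB[OF e0] by (elim exE conjE)
    have "\<forall>e\<in>edges G - {f0}. prop_e e h"
    proof
      fix e assume e: "e \<in> edges G - {f0}"
      then consider "e \<in> E1 - {et}" | "e \<in> E2 - B" | e' where "e' \<in> B" "e = nE e'"
        using Ge by blast
      then show "prop_e e h"
      proof cases
        case 1 then show ?thesis using h(2) by blast
      next
        case c: 2
        then have "e \<in> E2 - B - {e0}" using 3(1) by blast
        then show ?thesis using h(3) by blast
      next
        case c: 3
        have "e' \<noteq> e0"
        proof
          assume "e' = e0" then have "e = f0" using c(2) 3(2) by simp
          then show False using e by simp
        qed
        then have "e' \<in> B - {e0}" using c(1) by simp
        then show ?thesis using h(4) c(2) by blast
      qed
    qed
    then show ?thesis using h(1) by blast
  qed
qed
lemma Bne: "B \<noteq> {}" using cardB k2 by auto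

lemma col_k1: "colorable G (k + 1)"
proof -
  obtain e0 where e0: "e0 \<in> B" using Bne by blast
  have f0: "nE e0 \<in> edges G" using Ge e0 by simp
  obtain v where v: "v \<in> nE e0" using B_facts(3)[OF e0] unfolding nE_def by blast
  obtain h where h: "\<forall>v\<in>verts G. h v < k" "\<forall>e\<in>edges G - {nE e0}. prop_e e h"
    using del_edge[OF f0] by blast
  have hg: "hypergraph G" using hyp_G .
  show ?thesis unfolding colorable_def
  proof (intro exI[of _ "h(v := k)"] conjI ballI)
    fix u assume "u \<in> verts G"
    then show "(h(v := k)) u < k + 1" using h(1) by (cases "u = v") auto
  next
    fix e assume e: "e \<in> edges G"
    have eV: "e \<subseteq> verts G" using hg e unfolding hypergraph_def by blast
    have c2: "card e \<ge> 2" using hg e unfolding hypergraph_def by blast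
    show "\<exists>u\<in>e. \<exists>w\<in>e. (h(v := k)) u \<noteq> (h(v := k)) w"
    proof (cases "v \<in> e")
      case True
      obtain w where w: "w \<in> e" "w \<noteq> v" using two_elems[OF c2] by blast
      have "h w < k" using h(1) w eV by blast
      then have "(h(v := k)) w \<noteq> (h(v := k)) v" using w by simp
      then show ?thesis using w True by blast
    next
      case False
      then have "e \<noteq> nE e0" using v by blast
      then obtain u w where uw: "u \<in> e" "w \<in> e" "h u \<noteq> h w" using h(2) e unfolding prop_e_def by blast
      have "u \<noteq> v" "w \<noteq> v" using uw False by auto
      then show ?thesis using uw by (intro bexI[of _ u] bexI[of _ w]) auto
    qed
  qed
qed

lemma no_iso:
  assumes v: "v \<in> verts G" shows "\<exists>e\<in>edges G. v \<in> e"
proof -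
  have "v \<in> V1 \<or> v \<in> V2 - {vt}" using v Gv by auto
  then show ?thesis
  proof
    assume vV: "v \<in> V1"
    obtain e where e: "e \<in> E1" "v \<in> e" using critical_no_isolated[OF crit1 _ vV] k2 by auto
    show ?thesis
    proof (cases "e = et")
      case True
      then obtain e' where e': "e' \<in> B" "v \<in> s e'" using unionB e(2) by blast
      then have "v \<in> nE e'" unfolding nE_def by simp
      moreover have "nE e' \<in> edges G" using Ge e'(1) by simp
      ultimately show ?thesis by blast
    next
      case False
      then have "e \<in> edges G" using Ge e(1) by simp
      then show ?thesis using e(2) by blast
    qed
  next
    assume vV: "v \<in> V2 - {vt}"
    obtain e where e: "e \<in> E2" "v \<in> e" using critical_no_isolated[OF crit2, of v] vV k2 by auto
    show ?thesis
    proof (cases "e \<in> B")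
      case True
      then have "v \<in> nE e" using e(2) vV unfolding nE_def by simp
      moreover have "nE e \<in> edges G" using Ge True by simp
      ultimately show ?thesis by blast
    next
      case False
      then have "e \<in> edges G" using Ge e(1) by simp
      then show ?thesis using e(2) by blast
    qed
  qed
qed

lemma crit_G: "critical G (k + 1)"
  unfolding critical_def
proof (intro conjI allI impI)
  show "hypergraph G" using hyp_G .
  show "chi G = k + 1" using chi_eqI[OF col_k1 not_col] .
  fix H assume H: "subhypergraph H G \<and> H \<noteq> G"
  have hH: "hypergraph H" and vH: "verts H \<subseteq> verts G" and eH: "edges H \<subseteq> edges G"
    using H unfolding subhypergraph_def by auto
  have "colorable H k"
  proof (cases "edges H = edges G")
    case True
    have "verts G \<subseteq> verts H"
    proof
      fix v assume "v \<in> verts G"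
      then obtain e where e: "e \<in> edges G" "v \<in> e" using no_iso by blast
      then have "e \<subseteq> verts H" using True hH unfolding hypergraph_def by blast
      then show "v \<in> verts H" using e by blast
    qed
    then have "verts H = verts G" using vH by blast
    then have "H = G" using True unfolding verts_def edges_def by (simp add: prod_eq_iff)
    then show ?thesis using H by blast
  next
    case False
    then obtain f0 where f0: "f0 \<in> edges G" "f0 \<notin> edges H" using eH by blast
    obtain h where h: "\<forall>v\<in>verts G. h v < k" "\<forall>e\<in>edges G - {f0}. prop_e e h"
      using del_edge[OF f0(1)] by blast
    show ?thesis unfolding colorable_def
    proof (intro exI[of _ h] conjI ballI)
      fix v assume "v \<in> verts H" then show "h v < k" using h(1) vH by blast
    next
      fix e assume e: "e \<in> edges H"
      then have "e \<in> edges G - {f0}" using eH f0(2) by blast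
      then show "\<exists>u\<in>e. \<exists>w\<in>e. h u \<noteq> h w" using h(2) unfolding prop_e_def by blast
    qed
  qed
  then show "chi H < k + 1" using chi_less_iff[OF hH] by blast
qed

lemma bound_eq: "boundary G V1 = nE ` B"
proof
  show "boundary G V1 \<subseteq> nE ` B"
  proof
    fix e assume e: "e \<in> boundary G V1"
    then have eG: "e \<in> edges G" and m1: "e \<inter> V1 \<noteq> {}" and m2: "e \<inter> (verts G - V1) \<noteq> {}"
      unfolding boundary_def by auto
    consider "e \<in> E1 - {et}" | "e \<in> E2 - B" | "e \<in> nE ` B" using eG Ge by blast
    then show "e \<in> nE ` B"
    proof cases
      case 1 then have "e \<subseteq> V1" using E1sub by blast
      then show ?thesis using m2 by blast
    next
      case 2 then have "e \<subseteq> V2" using E2sub by blast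
      then show ?thesis using m1 disj by blast
    qed
  qed
  show "nE ` B \<subseteq> boundary G V1"
  proof
    fix e assume "e \<in> nE ` B"
    then obtain e' where e': "e' \<in> B" "e = nE e'" by blast
    have eG: "e \<in> edges G" using Ge e' by simp
    obtain w where w: "w \<in> s e'" using B_facts(3)[OF e'(1)] by blast
    have "w \<in> e \<inter> V1" using w e' nE_V1 by blast
    moreover obtain u where u: "u \<in> e'" "u \<noteq> vt" using B_rest[OF e'(1)] by blast
    have "u \<in> e - V1" using u e' nE_V2 by blast
    moreover have "u \<in> verts G" using u B_facts(1)[OF e'(1)] Gv by blast
    ultimately show "e \<in> boundary G V1" using eG unfolding boundary_def by blast
  qed
qed

lemma inj_nE: "inj_on nE B"
proof (rule inj_onI)
  fix x y assume xy: "x \<in> B" "y \<in> B" "nE x = nE y"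
  have "x - {vt} = y - {vt}" using nE_V2[OF xy(1)] nE_V2[OF xy(2)] xy(3) by simp
  moreover have "vt \<in> x" "vt \<in> y" using B_facts(4) xy by auto
  ultimately show "x = y" by blast
qed

lemma card_bound: "card (boundary G V1) = k"
  using bound_eq card_image[OF inj_nE] cardB by simp

lemma sep: "separating G (boundary G V1)"
proof -
  let ?N = "boundary G V1"
  let ?G' = "delete_edges G ?N"
  let ?V = "verts G"
  have hg: "hypergraph G" using hyp_G .
  have sub: "?N \<subseteq> edges G" unfolding boundary_def by blast
  have vG': "verts ?G' = ?V" and eG': "edges ?G' = edges G - ?N"
    unfolding delete_edges_def verts_def edges_def by auto
  have PowG: "edges G \<subseteq> Pow ?V" using hg unfolding hypergraph_def by blast
  then have PowG': "edges ?G' \<subseteq> Pow (verts ?G')" using vG' eG' by blast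
  have eq: "equiv ?V (conn_rel G)" using conn_equiv[OF PowG] .
  have eq': "equiv ?V (conn_rel ?G')" using conn_equiv[OF PowG'] vG' by simp
  have Rsub: "conn_rel ?G' \<subseteq> conn_rel G"
  proof -
    have "adj_rel ?G' \<subseteq> adj_rel G" unfolding adj_rel_def using eG' by auto
    then have "(adj_rel ?G')\<^sup>+ \<subseteq> (adj_rel G)\<^sup>+" by (rule trancl_mono_subset)
    then show ?thesis unfolding conn_rel_def using vG' by auto
  qed
  obtain e0 where e0: "e0 \<in> B" using Bne by blast
  obtain u where u: "u \<in> e0" "u \<noteq> vt" using B_rest[OF e0] by blast
  obtain w where w: "w \<in> s e0" using B_facts(3)[OF e0] by blast
  have uV2: "u \<in> V2 - {vt}" using u B_facts(1)[OF e0] by blast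
  have wV1: "w \<in> V1" using w B_facts(2)[OF e0] by blast
  have uV: "u \<in> ?V" and wV: "w \<in> ?V" using uV2 wV1 Gv by auto
  have "(u, w) \<in> adj_rel G"
  proof -
    have "nE e0 \<in> edges G" using Ge e0 by simp
    moreover have "u \<in> nE e0" "w \<in> nE e0" using u w unfolding nE_def by auto
    ultimately show ?thesis unfolding adj_rel_def by blast
  qed
  then have uwR: "(u, w) \<in> conn_rel G" unfolding conn_rel_def by blast
  define S where "S = V1 \<times> V1 \<union> (V2 - {vt}) \<times> (V2 - {vt})"
  have transS: "trans S"
  proof (rule transI)
    fix x y z assume "(x, y) \<in> S" "(y, z) \<in> S"
    then show "(x, z) \<in> S" unfolding S_def using disj by blast
  qed
  have adjS: "adj_rel ?G' \<subseteq> S"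
  proof
    fix p assume "p \<in> adj_rel ?G'"
    then obtain x y e where p: "p = (x, y)" "e \<in> edges ?G'" "x \<in> e" "y \<in> e"
      unfolding adj_rel_def by auto
    have "e \<in> edges G" "e \<notin> nE ` B" using p(2) eG' bound_eq by auto
    then have "e \<in> E1 - {et} \<or> e \<in> E2 - B" using Ge by blast
    then show "p \<in> S"
    proof
      assume "e \<in> E1 - {et}" then have "e \<subseteq> V1" using E1sub by blast
      then show ?thesis using p unfolding S_def by auto
    next
      assume "e \<in> E2 - B" then have "e \<subseteq> V2 - {vt}" using E2B by blast
      then show ?thesis using p unfolding S_def by auto
    qed
  qed
  have "(adj_rel ?G')\<^sup>+ \<subseteq> S\<^sup>+" using adjS by (rule trancl_mono_subset)
  then have tS: "(adj_rel ?G')\<^sup>+ \<subseteq> S" using trancl_id[OF transS] by simp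
  have "Id_on ?V \<subseteq> S" unfolding S_def using Gv by auto
  then have "conn_rel ?G' \<subseteq> S" using tS vG' unfolding conn_rel_def by auto
  moreover have "(u, w) \<notin> S" unfolding S_def using uV2 wV1 disj by blast
  ultimately have uwR': "(u, w) \<notin> conn_rel ?G'" by blast
  have finV: "finite ?V" using hg unfolding hypergraph_def by blast
  have "card (?V // conn_rel G) < card (?V // conn_rel ?G')"
    using quot_less[OF finV eq eq' Rsub uwR uwR' uV wV] .
  then have "num_components G < num_components ?G'" unfolding num_components_def using vG' by simp
  then show ?thesis unfolding separating_def using sub by blast
qed

end

theorem theorem15:
  fixes G1 G2 :: "'a hgraph" and et :: "'a set" and vt :: 'a and s :: "'a set \<Rightarrow> 'a set"
    and k :: nat
  assumes "k \<ge> 2"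
    and "verts G1 \<inter> verts G2 = {}"
    and "critical G1 (k + 1)"
    and "critical G2 (k + 1)"
    and "et \<in> edges G1"
    and "vt \<in> verts G2"
    and "degree G2 vt = k"
    and "admissible et G2 vt s"
  shows "critical (splitting G1 et G2 vt s) (k + 1)
       \<and> separating (splitting G1 et G2 vt s) (boundary (splitting G1 et G2 vt s) (verts G1))
       \<and> card (boundary (splitting G1 et G2 vt s) (verts G1)) = k"
proof -
  interpret SP G1 G2 et vt s k using assms by unfold_locales
  show ?thesis by (intro conjI crit_G sep card_bound)
qed


end
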